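(* Let $f:\mathbb{R}^p\to\mathbb{R}\cup\{+\infty\}$ be self-concordant, $\psi:\mathbb{R}^n\to\mathbb{R}\cup\{+\infty\}$ proper, closed, convex, and $D\in\mathbb{R}^{n\times p}$ of full row rank ($n\le p$). Let $\varphi(y):=f^\ast(-D^\top y)$, and let $y^k\in\operatorname{dom}\varphi$ with $\nabla^2\varphi(y^k)=D\nabla^2 f^\ast(-D^\top y^k)D^\top\succ0$. Fix $\xi^0\in\partial\psi^\ast(y^0)$ for some $y^0$, $\tau_{k+1}\in(0,1]$, and set $\nabla\varphi_{\tau_{k+1}}(y^k):=\nabla\varphi(y^k)-(\tfrac{1}{\tau_{k+1}}-1)\xi^0$, $$\mathcal{P}_k(y):=\langle\nabla\varphi_{\tau_{k+1}}(y^k),y-y^k\rangle+\tfrac12\langle\nabla^2\varphi(y^k)(y-y^k),y-y^k\rangle+\tfrac{1}{\tau_{k+1}}\psi^\ast(y),$$ with minimizer $\bar y^{k+1}$, and $H:=\nabla^2\varphi(y^k)^{-1}$, $h:=y^k-\nabla^2\varphi(y^k)^{-1}\nabla\varphi_{\tau_{k+1}}(y^k)$. Let $\delta\ge0$ and let $z^{k+1}\in\mathbb{R}^n$ be a $\delta$-approximate solution of $\min_z\{\tfrac12\langle Hz,z\rangle-\langle h,z\rangle+\tfrac{1}{\tau_{k+1}}\psi(\tau_{k+1}z)\}$ in the sense that there exists $\tilde e_k$ with $\|\tilde e_k\|_{y^k}\le\delta$ and $\tilde e_k\in Hz^{k+1}-h+\partial\psi(\tau_{k+1}z^{k+1})$.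 Define $$y^{k+1}:=y^k-\nabla^2\varphi(y^k)^{-1}\big(\nabla\varphi_{\tau_{k+1}}(y^k)+z^{k+1}\big)+\tilde e_k.$$ Then $\mathcal{P}_k(y^{k+1})-\mathcal{P}_k(\bar y^{k+1})\le\frac{\delta^2}{2}$.
   Context: $f^\ast,\psi^\ast$ denote Fenchel conjugates. Local norm of $\varphi$: $\|u\|_y:=\langle\nabla^2\varphi(y)u,u\rangle^{1/2}$. Self-concordance of $f$: $|\langle\nabla^3 f(x)[u]u,u\rangle|\le2\langle\nabla^2 f(x)u,u\rangle^{3/2}$. *)

theory Defs
  imports "HOL-Analysis.Analysis"
begin

text \<open>Extended-real-valued functions \<open>f : E \<Rightarrow> \<real> \<union> {+\<infinity>}\<close> are modelled as \<open>E \<Rightarrow> ereal\<close>.\<close>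

definition edom :: "('a \<Rightarrow> ereal) \<Rightarrow> 'a set" where
  "edom f = {x. f x < \<infinity>}"

definition proper_fun :: "('a \<Rightarrow> ereal) \<Rightarrow> bool" where
  "proper_fun f \<longleftrightarrow> (\<forall>x. f x \<noteq> -\<infinity>) \<and> (\<exists>x. f x \<noteq> \<infinity>)"

definition convex_fun :: "('a::real_vector \<Rightarrow> ereal) \<Rightarrow> bool" where
  "convex_fun f \<longleftrightarrow> convex {(x, t::real). f x \<le> ereal t}"

definition closed_fun :: "('a::topological_space \<Rightarrow> ereal) \<Rightarrow> bool" where
  "closed_fun f \<longleftrightarrow> closed {(x, t::real). f x \<le> ereal t}"

definition fconj :: "('a::real_inner \<Rightarrow> ereal) \<Rightarrow> 'a \<Rightarrow> ereal" where
  "fconj f y = (SUP x. ereal (y \<bullet> x) - f x)"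

definition subdiff :: "('a::real_inner \<Rightarrow> ereal) \<Rightarrow> 'a \<Rightarrow> 'a set" where
  "subdiff f x = {g. \<bar>f x\<bar> \<noteq> \<infinity> \<and> (\<forall>z. f x + ereal (g \<bullet> (z - x)) \<le> f z)}"

definition self_concordant :: "('a::euclidean_space \<Rightarrow> ereal) \<Rightarrow> bool" where
  "self_concordant f \<longleftrightarrow>
     (\<forall>x. f x \<noteq> -\<infinity>) \<and> open (edom f) \<and> convex_fun f \<and> closed_fun f \<and>
     (\<exists>(f1 :: 'a \<Rightarrow> 'a \<Rightarrow>\<^sub>L real) (f2 :: 'a \<Rightarrow> 'a \<Rightarrow>\<^sub>L 'a \<Rightarrow>\<^sub>L real)
        (f3 :: 'a \<Rightarrow> 'a \<Rightarrow>\<^sub>L 'a \<Rightarrow>\<^sub>L 'a \<Rightarrow>\<^sub>L real).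
        continuous_on (edom f) f3 \<and>
        (\<forall>x\<in>edom f.
           ((\<lambda>x. real_of_ereal (f x)) has_derivative blinfun_apply (f1 x)) (at x) \<and>
           (f1 has_derivative blinfun_apply (f2 x)) (at x) \<and>
           (f2 has_derivative blinfun_apply (f3 x)) (at x) \<and>
           (\<forall>u. \<bar>blinfun_apply (blinfun_apply (blinfun_apply (f3 x) u) u) u\<bar>
                 \<le> 2 * (blinfun_apply (blinfun_apply (f2 x) u) u) powr (3/2))))"

definition pos_def :: "real^'n^'n \<Rightarrow> bool" where
  "pos_def M \<longleftrightarrow> transpose M = M \<and> (\<forall>v. v \<noteq> 0 \<longrightarrow> v \<bullet> (M *v v) > 0)"

text \<open>Local norm \<open>||u||_y\<close> w.r.t. the Hessian M = Hessian of phi at y.\<close>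
definition local_norm :: "real^'n^'n \<Rightarrow> real^'n \<Rightarrow> real" where
  "local_norm M u = sqrt (u \<bullet> (M *v u))"

end

theory Submission
  imports Defs
begin

lemma pd_right_inv:
  fixes M :: "real^'n^'n"
  assumes "pos_def M"
  shows "M *v (matrix_inv M *v x) = x"
proof -
  have "\<forall>x. M *v x = 0 \<longrightarrow> x = 0"
    using assms unfolding pos_def_def by (metis inner_zero_right less_irrefl)
  then have "\<exists>B. B ** M = mat 1" by (simp add: matrix_left_invertible_ker)
  then have "invertible M" by (simp add: invertible_left_inverse)
  then have "M ** matrix_inv M = mat 1 \<and> matrix_inv M ** M = mat 1"
    unfolding invertible_def matrix_inv_def by (rule someI_ex)
  then show ?thesis by (simp add: matrix_vector_mul_assoc)
qed

lemma sym_inner: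
  fixes M :: "real^'n^'n"
  assumes "transpose M = M"
  shows "x \<bullet> (M *v y) = (M *v x) \<bullet> y"
proof -
  have "x \<bullet> (M *v y) = (x v* M) \<bullet> y" by (simp add: dot_lmul_matrix)
  also have "x v* M = transpose M *v x" by simp
  finally show ?thesis using assms by simp
qed

lemma subdiff_conj:
  fixes \<psi> :: "'a::real_inner \<Rightarrow> ereal"
  assumes "g \<in> subdiff \<psi> w"
  obtains r where "\<psi> w = ereal r" "fconj \<psi> g = ereal (g \<bullet> w - r)"
    "\<And>y. ereal (y \<bullet> w - r) \<le> fconj \<psi> y"
proof -
  from assms have fin: "\<bar>\<psi> w\<bar> \<noteq> \<infinity>" and sg: "\<And>v. \<psi> w + ereal (g \<bullet> (v - w)) \<le> \<psi> v"
    unfolding subdiff_def by auto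
  obtain r where r: "\<psi> w = ereal r" using fin by (cases "\<psi> w") auto
  have lo: "ereal (y \<bullet> w - r) \<le> fconj \<psi> y" for y
    unfolding fconj_def by (rule SUP_upper2[of w]) (auto simp: r)
  have "fconj \<psi> g \<le> ereal (g \<bullet> w - r)"
    unfolding fconj_def
  proof (rule SUP_least)
    fix v
    have "ereal r + ereal (g \<bullet> (v - w)) \<le> \<psi> v" using sg[of v] r by simp
    then have "ereal (r + g \<bullet> (v - w)) \<le> \<psi> v" by simp
    then show "ereal (g \<bullet> v) - \<psi> v \<le> ereal (g \<bullet> w - r)"
      by (cases "\<psi> v") (auto simp: inner_diff_right)
  qed
  with lo[of g] have "fconj \<psi> g = ereal (g \<bullet> w - r)" by (intro antisym)
  with r lo that show ?thesis by blast
qed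

theorem lemma6p1:
  fixes f :: "real^'p \<Rightarrow> ereal" and \<psi> :: "real^'n \<Rightarrow> ereal"
    and D :: "real^'p^'n"
    and \<phi> :: "real^'n \<Rightarrow> ereal"
    and g\<phi> :: "real^'n \<Rightarrow> real^'n" and H\<phi> :: "real^'n^'n"
    and yk y0 \<xi>0 ybar z e :: "real^'n"
    and \<tau> \<delta> :: real
  assumes sc: "self_concordant f"
    and psi_proper: "proper_fun \<psi>" and psi_closed: "closed_fun \<psi>" and psi_convex: "convex_fun \<psi>"
    and n_le_p: "CARD('n) \<le> CARD('p)"
    and D_rank: "rank D = CARD('n)"
    and phi_def: "\<phi> = (\<lambda>y. fconj f (- (transpose D *v y)))"
    and yk_dom: "yk \<in> edom \<phi>"
    \<comment> \<open>\<phi> is finite near yk with gradient g\<phi>, and g\<phi> is differentiable at yk with Hessian H\<phi>\<close>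
    and grad: "\<exists>U. open U \<and> yk \<in> U \<and> (\<forall>y\<in>U. \<bar>\<phi> y\<bar> \<noteq> \<infinity> \<and>
                  ((\<lambda>y. real_of_ereal (\<phi> y)) has_derivative (\<lambda>v. g\<phi> y \<bullet> v)) (at y))"
    and hess: "(g\<phi> has_derivative (\<lambda>v. H\<phi> *v v)) (at yk)"
    and hess_pd: "pos_def H\<phi>"
    and xi0: "\<xi>0 \<in> subdiff (fconj \<psi>) y0"
    and tau: "0 < \<tau>" "\<tau> \<le> 1"
    and Pmin: "\<forall>y. (let P = (\<lambda>y. ereal ((g\<phi> yk - (1/\<tau> - 1) *\<^sub>R \<xi>0) \<bullet> (y - yk))
                                + ereal ((1/2) * ((H\<phi> *v (y - yk)) \<bullet> (y - yk)))
                                + ereal (1/\<tau>) * fconj \<psi> y)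
                     in P ybar \<le> P y)"
    and delta: "0 \<le> \<delta>"
    and e_norm: "local_norm H\<phi> e \<le> \<delta>"
    and e_incl: "e \<in> (\<lambda>g. matrix_inv H\<phi> *v z - (yk - matrix_inv H\<phi> *v (g\<phi> yk - (1/\<tau> - 1) *\<^sub>R \<xi>0)) + g)
                     ` subdiff \<psi> (\<tau> *\<^sub>R z)"
  shows "(let P = (\<lambda>y. ereal ((g\<phi> yk - (1/\<tau> - 1) *\<^sub>R \<xi>0) \<bullet> (y - yk))
                        + ereal ((1/2) * ((H\<phi> *v (y - yk)) \<bullet> (y - yk)))
                        + ereal (1/\<tau>) * fconj \<psi> y);
              ynext = yk - matrix_inv H\<phi> *v ((g\<phi> yk - (1/\<tau> - 1) *\<^sub>R \<xi>0) + z) + e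
          in P ynext - P ybar \<le> ereal (\<delta>\<^sup>2 / 2))"
proof -
  define M where "M = H\<phi>"
  define c where "c = g\<phi> yk - (1/\<tau> - 1) *\<^sub>R \<xi>0"
  define P where "P = (\<lambda>y. ereal (c \<bullet> (y - yk)) + ereal ((1/2) * ((M *v (y - yk)) \<bullet> (y - yk)))
                        + ereal (1/\<tau>) * fconj \<psi> y)"
  obtain g where g: "g \<in> subdiff \<psi> (\<tau> *\<^sub>R z)"
    and eg: "e = matrix_inv M *v z - (yk - matrix_inv M *v c) + g"
    using e_incl unfolding M_def c_def by blast
  define yn where "yn = yk - matrix_inv M *v (c + z) + e"
  have Mpd: "pos_def M" using hess_pd M_def by simp
  have ynd: "yn = g" unfolding yn_def eg by (simp add: algebra_simps)
  obtain r where r1: "fconj \<psi> g = ereal (g \<bullet> (\<tau> *\<^sub>R z) - r)"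
    and r2: "\<And>y. ereal (y \<bullet> (\<tau> *\<^sub>R z) - r) \<le> fconj \<psi> y"
    using subdiff_conj[OF g] by metis
  define q where "q = (\<lambda>v. (M *v v) \<bullet> v)"
  define A where "A = c \<bullet> (g - yk) + (1/2) * q (g - yk) + (1/\<tau>) * (g \<bullet> (\<tau> *\<^sub>R z) - r)"
  define B where "B = c \<bullet> (ybar - yk) + (1/2) * q (ybar - yk) + (1/\<tau>) * (ybar \<bullet> (\<tau> *\<^sub>R z) - r)"
  have PA: "P yn = ereal A" unfolding ynd P_def A_def q_def r1 by simp
  have "ereal (1/\<tau>) * ereal (ybar \<bullet> (\<tau> *\<^sub>R z) - r) \<le> ereal (1/\<tau>) * fconj \<psi> ybar"
    by (rule ereal_mult_left_mono[OF r2]) (use tau in simp)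
  then have "ereal (c \<bullet> (ybar - yk) + (1/2) * q (ybar - yk)) + ereal (1/\<tau>) * ereal (ybar \<bullet> (\<tau> *\<^sub>R z) - r)
     \<le> ereal (c \<bullet> (ybar - yk) + (1/2) * q (ybar - yk)) + ereal (1/\<tau>) * fconj \<psi> ybar"
    by (rule add_left_mono)
  then have PB: "ereal B \<le> P ybar" unfolding P_def B_def q_def
    by (simp only: times_ereal.simps plus_ereal.simps)
  have sym: "transpose M = M" using Mpd unfolding pos_def_def by simp
  have Ma: "M *v (g - yk) = M *v e - (c + z)"
    unfolding ynd[symmetric] yn_def using pd_right_inv[OF Mpd]
    by (simp add: matrix_vector_mult_diff_distrib matrix_vector_right_distrib)
  define d where "d = ybar - g"
  have qsplit: "q (ybar - yk) = q (g - yk) + 2 * ((M *v (g - yk)) \<bullet> d) + q d"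
  proof -
    have e1: "ybar - yk = (g - yk) + d" unfolding d_def by simp
    have "q ((g - yk) + d) = q (g - yk) + (M *v (g - yk)) \<bullet> d + (M *v d) \<bullet> (g - yk) + q d"
      unfolding q_def by (simp add: matrix_vector_right_distrib inner_add_left inner_add_right)
    moreover have "(M *v d) \<bullet> (g - yk) = (M *v (g - yk)) \<bullet> d"
      using sym_inner[OF sym, of "g - yk" d] by (simp add: inner_commute)
    ultimately show ?thesis unfolding e1 by simp
  qed
  have qsplit2: "q (d + e) = q d + 2 * ((M *v e) \<bullet> d) + q e"
  proof -
    have "q (d + e) = q d + (M *v d) \<bullet> e + (M *v e) \<bullet> d + q e"
      unfolding q_def by (simp add: matrix_vector_right_distrib inner_add_left inner_add_right)
    moreover have "(M *v d) \<bullet> e = (M *v e) \<bullet> d"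
      using sym_inner[OF sym, of e d] by (simp add: inner_commute)
    ultimately show ?thesis by simp
  qed
  have qnn: "0 \<le> q v" for v
    using Mpd unfolding pos_def_def q_def
    by (cases "v = 0") (auto simp: inner_commute less_imp_le)
  have qe: "q e \<le> \<delta>\<^sup>2"
  proof -
    have "sqrt (q e) \<le> \<delta>" using e_norm unfolding local_norm_def q_def M_def
      by (simp add: inner_commute)
    then have "(sqrt (q e))\<^sup>2 \<le> \<delta>\<^sup>2" using qnn[of e] by (intro power_mono) auto
    then show ?thesis using qnn[of e] by simp
  qed
  have "B - A = c \<bullet> d + (1/2) * (q (ybar - yk) - q (g - yk)) + (1/\<tau>) * (d \<bullet> (\<tau> *\<^sub>R z))"
    unfolding A_def B_def d_def by (simp add: algebra_simps inner_diff_left inner_diff_right)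
  also have "(1/\<tau>) * (d \<bullet> (\<tau> *\<^sub>R z)) = z \<bullet> d" using tau by (simp add: inner_commute)
  also have "c \<bullet> d + (1/2) * (q (ybar - yk) - q (g - yk)) + z \<bullet> d = (M *v e) \<bullet> d + (1/2) * q d"
    unfolding qsplit Ma by (simp add: algebra_simps inner_diff_left inner_add_left)
  finally have "A - B = (1/2) * q e - (1/2) * q (d + e)" unfolding qsplit2 by (simp add: field_simps)
  then have AB: "A - B \<le> \<delta>\<^sup>2 / 2" using qe qnn[of "d + e"] by simp
  have "P yn - P ybar \<le> ereal (\<delta>\<^sup>2 / 2)"
  proof (cases "P ybar")
    case (real b)
    then show ?thesis using PA PB AB by simp
  next
    case PInf
    then show ?thesis using PA by simp
  next
    case MInf
    then show ?thesis using PB by simp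
  qed
  then show ?thesis unfolding P_def yn_def c_def M_def Let_def .
qed

end
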